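(* Let $\Omega\subset\mathbb{R}^N$ be a bounded open connected set, $F:\Omega\times\mathbb{R}\times\mathcal{S}(N)\to\mathbb{R}$ continuous with $\Gamma(x):=\{(r,A):F(x,r,A)=0\}\neq\emptyset$ for each $x\in\Omega$, and let $\Phi$ be a proper elliptic map on $\Omega$ such that $F(x,r+s,A+P)\ge F(x,r,A)$ for all $x\in\Omega$, $(r,A)\in\Phi(x)$, $(s,P)\in\mathcal{Q}$. Assume that $\Phi(x)\cap\Gamma(x)\neq\emptyset$ for each $x\in\Omega$ and that $\partial\Phi(x)\subset\{(r,A)\in\mathbb{R}\times\mathcal{S}(N):F(x,r,A)\le 0\}$ for each $x\in\Omega$. Then the map $\Theta(x):=\{(r,A)\in\Phi(x):F(x,r,A)\ge 0\}$ is a proper elliptic map and $\partial\Theta(x)\subset\Gamma(x)$ for every $x\in\Omega$ (i.e. $\Theta$ defines a proper elliptic branch of $F(x,u,D^2u)=0$).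
   Context: $\mathcal{S}(N)$: real symmetric $N\times N$ matrices with the usual partial order. $\mathcal{Q}:=\{(s,P)\in\mathbb{R}\times\mathcal{S}(N): s\le0,\ P\ge0\}$. A proper elliptic map $\Phi$ on $\Omega$ assigns to each $x\in\Omega$ a closed, nonempty set $\Phi(x)\subsetneq\mathbb{R}\times\mathcal{S}(N)$ with $\Phi(x)+\mathcal{Q}\subset\Phi(x)$. $\partial$ denotes topological boundary in $\mathbb{R}\times\mathcal{S}(N)$. *)

theory Defs
  imports "HOL-Analysis.Analysis"
begin

definition sym_mats :: "(real^'n^'n) set" where
  "sym_mats = {A. transpose A = A}"

definition psd :: "real^'n^'n \<Rightarrow> bool" where
  "psd P \<longleftrightarrow> P \<in> sym_mats \<and> (\<forall>v. 0 \<le> v \<bullet> (P *v v))"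

definition RS :: "(real \<times> (real^'n^'n)) set" where
  "RS = UNIV \<times> sym_mats"

definition Qcone :: "(real \<times> (real^'n^'n)) set" where
  "Qcone = {(s, P). s \<le> 0 \<and> psd P}"

definition bdry :: "(real \<times> (real^'n^'n)) set \<Rightarrow> (real \<times> (real^'n^'n)) set" where
  "bdry S = (top_of_set RS) frontier_of S"

definition proper_elliptic_map ::
  "(real^'n) set \<Rightarrow> (real^'n \<Rightarrow> (real \<times> (real^'n^'n)) set) \<Rightarrow> bool" where
  "proper_elliptic_map \<Omega> \<Phi> \<longleftrightarrow>
     (\<forall>x\<in>\<Omega>. \<Phi> x \<subseteq> RS \<and> closedin (top_of_set RS) (\<Phi> x) \<and> \<Phi> x \<noteq> {} \<and> \<Phi> x \<noteq> RS \<and>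
        (\<forall>r A s P. (r, A) \<in> \<Phi> x \<longrightarrow> (s, P) \<in> Qcone \<longrightarrow> (r + s, A + P) \<in> \<Phi> x))"

end

theory Submission
  imports Defs
begin

lemma cont_slice:
  fixes F :: "real^'n \<Rightarrow> real \<Rightarrow> real^'n^'n \<Rightarrow> real"
  assumes "continuous_on (\<Omega> \<times> RS) (\<lambda>(x, r, A). F x r A)" "x \<in> \<Omega>"
  shows "continuous_on RS (\<lambda>y. F x (fst y) (snd y))"
proof -
  have "continuous_on RS (\<lambda>y. (x, y))" by (intro continuous_intros)
  moreover have "(\<lambda>y. (x, y)) ` RS \<subseteq> \<Omega> \<times> RS" using assms(2) by auto
  ultimately have "continuous_on RS ((\<lambda>(x, r, A). F x r A) \<circ> (\<lambda>y. (x, y)))"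
    using continuous_on_compose continuous_on_subset assms(1) by blast
  then show ?thesis by (simp add: o_def case_prod_beta)
qed

theorem theorem6p3:
  fixes \<Omega> :: "(real^'n) set"
    and F :: "real^'n \<Rightarrow> real \<Rightarrow> real^'n^'n \<Rightarrow> real"
    and \<Phi> :: "real^'n \<Rightarrow> (real \<times> (real^'n^'n)) set"
  assumes "bounded \<Omega>" and "open \<Omega>" and "connected \<Omega>"
    and "continuous_on (\<Omega> \<times> RS) (\<lambda>(x, r, A). F x r A)"
    and "\<forall>x\<in>\<Omega>. {(r, A). A \<in> sym_mats \<and> F x r A = 0} \<noteq> {}"
    and "proper_elliptic_map \<Omega> \<Phi>"
    and "\<forall>x\<in>\<Omega>. \<forall>r A s P. (r, A) \<in> \<Phi> x \<longrightarrow> (s, P) \<in> Qcone \<longrightarrow>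
            F x (r + s) (A + P) \<ge> F x r A"
    and "\<forall>x\<in>\<Omega>. \<Phi> x \<inter> {(r, A). A \<in> sym_mats \<and> F x r A = 0} \<noteq> {}"
    and "\<forall>x\<in>\<Omega>. bdry (\<Phi> x) \<subseteq> {(r, A). A \<in> sym_mats \<and> F x r A \<le> 0}"
  shows "proper_elliptic_map \<Omega> (\<lambda>x. {(r, A). (r, A) \<in> \<Phi> x \<and> F x r A \<ge> 0})
    \<and> (\<forall>x\<in>\<Omega>. bdry {(r, A). (r, A) \<in> \<Phi> x \<and> F x r A \<ge> 0}
                 \<subseteq> {(r, A). A \<in> sym_mats \<and> F x r A = 0})"
proof -
  have main: "\<Theta> \<subseteq> RS \<and> closedin (top_of_set RS) \<Theta> \<and> \<Theta> \<noteq> {} \<and> \<Theta> \<noteq> RS \<and>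
        (\<forall>r A s P. (r, A) \<in> \<Theta> \<longrightarrow> (s, P) \<in> Qcone \<longrightarrow> (r + s, A + P) \<in> \<Theta>)
       \<and> bdry \<Theta> \<subseteq> {(r, A). A \<in> sym_mats \<and> F x r A = 0}"
    if x: "x \<in> \<Omega>" and Th: "\<Theta> = {(r, A). (r, A) \<in> \<Phi> x \<and> F x r A \<ge> 0}" for x \<Theta>
  proof -
    define G where "G = (\<lambda>y. F x (fst y) (snd y))"
    have G: "continuous_on RS G" unfolding G_def using cont_slice[OF assms(4) x] .
    have Th2: "\<Theta> = \<Phi> x \<inter> (RS \<inter> G -` {0..})"
    proof -
      have "\<Phi> x \<subseteq> RS" using assms(6) x unfolding proper_elliptic_map_def by blast
      then show ?thesis unfolding Th G_def by auto
    qed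
    have P: "\<Phi> x \<subseteq> RS" "closedin (top_of_set RS) (\<Phi> x)" "\<Phi> x \<noteq> RS"
      "\<And>r A s P. (r, A) \<in> \<Phi> x \<Longrightarrow> (s, P) \<in> Qcone \<Longrightarrow> (r + s, A + P) \<in> \<Phi> x"
      using assms(6) x unfolding proper_elliptic_map_def by blast+
    have c1: "closedin (top_of_set RS) (RS \<inter> G -` {0..})"
      by (rule continuous_closedin_preimage[OF G]) simp
    have cl: "closedin (top_of_set RS) \<Theta>" unfolding Th2 using P(2) c1 by blast
    have sub: "\<Theta> \<subseteq> RS" using Th2 by blast
    have ne: "\<Theta> \<noteq> {}" using assms(8) x unfolding Th by fastforce
    have nR: "\<Theta> \<noteq> RS" using P(1,3) Th2 by blast
    have mono: "(r + s, A + P) \<in> \<Theta>" if "(r, A) \<in> \<Theta>" "(s, P) \<in> Qcone" for r A s P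
      using that P(4)[of r A s P] assms(7) x unfolding Th by fastforce
    have bd: "bdry \<Theta> \<subseteq> {(r, A). A \<in> sym_mats \<and> F x r A = 0}"
    proof
      fix z assume z: "z \<in> bdry \<Theta>"
      have zT: "z \<in> \<Theta>" using z cl unfolding bdry_def
        using frontier_of_subset_closedin[OF cl] z unfolding bdry_def by blast
      have zR: "z \<in> RS" using zT sub by blast
      have sym: "snd z \<in> sym_mats" using zR unfolding RS_def by auto
      have ge: "G z \<ge> 0" using zT unfolding Th G_def by auto
      have le: "G z \<le> 0"
      proof (rule ccontr)
        assume "\<not> G z \<le> 0"
        hence gz: "G z > 0" by simp
        show False
        proof (cases "z \<in> bdry (\<Phi> x)")
          case True
          then have "z \<in> {(r, A). A \<in> sym_mats \<and> F x r A \<le> 0}" using assms(9) x by blast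
          then show False using gz unfolding G_def by (cases z) auto
        next
          case False
          have zP: "z \<in> \<Phi> x" using zT Th2 by blast
          have zi: "z \<in> top_of_set RS interior_of \<Phi> x"
          proof -
            have "z \<in> top_of_set RS closure_of \<Phi> x"
              using closure_of_subset[of "\<Phi> x" "top_of_set RS"] P(1) zP by auto
            then show ?thesis using False unfolding bdry_def frontier_of_def by blast
          qed
          have o1: "openin (top_of_set RS) (RS \<inter> G -` {0<..})"
            by (rule continuous_openin_preimage_gen[OF G]) simp
          define U where "U = (top_of_set RS interior_of \<Phi> x) \<inter> (RS \<inter> G -` {0<..})"
          have oU: "openin (top_of_set RS) U" unfolding U_def by (rule openin_Int[OF openin_interior_of o1])
          have UT: "U \<subseteq> \<Theta>" 
          proof
            fix y assume "y \<in> U"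
            then have "y \<in> \<Phi> x" "y \<in> RS" "G y > 0"
              unfolding U_def using interior_of_subset[of "top_of_set RS" "\<Phi> x"] by auto
            then show "y \<in> \<Theta>" unfolding Th2 by auto
          qed
          have zU: "z \<in> U" unfolding U_def using zi zR gz by auto
          have "z \<in> top_of_set RS interior_of \<Theta>"
            using interior_of_maximal[OF UT oU] zU by (rule subsetD)
          then show False using z unfolding bdry_def frontier_of_def by blast
        qed
      qed
      show "z \<in> {(r, A). A \<in> sym_mats \<and> F x r A = 0}"
        using sym ge le unfolding G_def by (cases z) auto
    qed
    have mono': "\<forall>r A s P. (r, A) \<in> \<Theta> \<longrightarrow> (s, P) \<in> Qcone \<longrightarrow> (r + s, A + P) \<in> \<Theta>"
      using mono by blast
    show ?thesis by (intro conjI sub cl ne nR mono' bd)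
  qed
  show ?thesis
  proof (intro conjI ballI)
    show "proper_elliptic_map \<Omega> (\<lambda>x. {(r, A). (r, A) \<in> \<Phi> x \<and> F x r A \<ge> 0})"
      unfolding proper_elliptic_map_def
      apply (intro ballI)
      subgoal premises p for x
        using main[OF p refl] by (elim conjE) (intro conjI; assumption)
      done
  next
    fix x assume x: "x \<in> \<Omega>"
    show "bdry {(r, A). (r, A) \<in> \<Phi> x \<and> F x r A \<ge> 0} \<subseteq> {(r, A). A \<in> sym_mats \<and> F x r A = 0}"
      using main[OF x refl] by (elim conjE)
  qed
qed

end
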